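(* Let $C$ be an $X$-completely transitive code in $H(m,q)$. Then $(m+1)|X|\ge q^m$.
   Context: $H(m,q)$ is the Hamming graph whose vertices are the $m$-tuples over an alphabet $Q$ of size $q$, two vertices adjacent iff they differ in exactly one coordinate; a code is a set $C$ of vertices, $d$ is Hamming distance, $\rho=\max_\alpha d(\alpha,C)$ its covering radius and $C_i=\{\alpha: d(\alpha,C)=i\}$. For a subgroup $X$ of the automorphism group of $H(m,q)$ stabilising $C$ setwise, $C$ is $X$-completely transitive if $X$ acts transitively on each of $C,C_1,\dots,C_\rho$. *)

theory Defs
  imports "HOL-Library.FuncSet"
begin

definition hamming_vertices :: "nat \<Rightarrow> 'a set \<Rightarrow> (nat \<Rightarrow> 'a) set" where
  "hamming_vertices m Q = PiE {..<m} (\<lambda>_. Q)"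

definition hamming_dist :: "nat \<Rightarrow> (nat \<Rightarrow> 'a) \<Rightarrow> (nat \<Rightarrow> 'a) \<Rightarrow> nat" where
  "hamming_dist m x y = card {i \<in> {..<m}. x i \<noteq> y i}"

text \<open>Graph automorphisms of H(m,q): bijections of the vertex set preserving adjacency
  (distance 1) in both directions; identity outside the vertex set, so that they are
  determined by their action on vertices.\<close>
definition hamming_aut :: "nat \<Rightarrow> 'a set \<Rightarrow> ((nat \<Rightarrow> 'a) \<Rightarrow> (nat \<Rightarrow> 'a)) \<Rightarrow> bool" where
  "hamming_aut m Q g \<longleftrightarrow>
     bij_betw g (hamming_vertices m Q) (hamming_vertices m Q) \<and>
     (\<forall>x\<in>hamming_vertices m Q. \<forall>y\<in>hamming_vertices m Q.
        hamming_dist m (g x) (g y) = 1 \<longleftrightarrow> hamming_dist m x y = 1) \<and>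
     (\<forall>x. x \<notin> hamming_vertices m Q \<longrightarrow> g x = x)"

definition aut_inv :: "nat \<Rightarrow> 'a set \<Rightarrow> ((nat \<Rightarrow> 'a) \<Rightarrow> (nat \<Rightarrow> 'a)) \<Rightarrow> (nat \<Rightarrow> 'a) \<Rightarrow> (nat \<Rightarrow> 'a)" where
  "aut_inv m Q g = (\<lambda>x. if x \<in> hamming_vertices m Q then inv_into (hamming_vertices m Q) g x else x)"

definition aut_subgroup :: "nat \<Rightarrow> 'a set \<Rightarrow> ((nat \<Rightarrow> 'a) \<Rightarrow> (nat \<Rightarrow> 'a)) set \<Rightarrow> bool" where
  "aut_subgroup m Q X \<longleftrightarrow>
     (\<forall>g\<in>X. hamming_aut m Q g) \<and> id \<in> X \<and>
     (\<forall>g\<in>X. \<forall>h\<in>X. g \<circ> h \<in> X) \<and> (\<forall>g\<in>X. aut_inv m Q g \<in> X)"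

definition dist_code :: "nat \<Rightarrow> (nat \<Rightarrow> 'a) \<Rightarrow> (nat \<Rightarrow> 'a) set \<Rightarrow> nat" where
  "dist_code m \<alpha> C = Min ((hamming_dist m \<alpha>) ` C)"

definition covering_radius :: "nat \<Rightarrow> 'a set \<Rightarrow> (nat \<Rightarrow> 'a) set \<Rightarrow> nat" where
  "covering_radius m Q C = Max ((\<lambda>\<alpha>. dist_code m \<alpha> C) ` hamming_vertices m Q)"

definition code_layer :: "nat \<Rightarrow> 'a set \<Rightarrow> (nat \<Rightarrow> 'a) set \<Rightarrow> nat \<Rightarrow> (nat \<Rightarrow> 'a) set" where
  "code_layer m Q C i = {\<alpha> \<in> hamming_vertices m Q. dist_code m \<alpha> C = i}"

definition completely_transitive ::
  "nat \<Rightarrow> 'a set \<Rightarrow> ((nat \<Rightarrow> 'a) \<Rightarrow> (nat \<Rightarrow> 'a)) set \<Rightarrow> (nat \<Rightarrow> 'a) set \<Rightarrow> bool" where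
  "completely_transitive m Q X C \<longleftrightarrow>
     aut_subgroup m Q X \<and> C \<subseteq> hamming_vertices m Q \<and> C \<noteq> {} \<and>
     (\<forall>g\<in>X. g ` C = C) \<and>
     (\<forall>i \<le> covering_radius m Q C. \<forall>\<alpha>\<in>code_layer m Q C i. \<forall>\<beta>\<in>code_layer m Q C i.
        \<exists>g\<in>X. g \<alpha> = \<beta>)"

end

theory Submission
  imports Defs
begin

theorem lemma2p9:
  fixes m q :: nat and Q :: "'a set" and X :: "((nat \<Rightarrow> 'a) \<Rightarrow> (nat \<Rightarrow> 'a)) set"
    and C :: "(nat \<Rightarrow> 'a) set"
  assumes "finite Q" and "card Q = q"
    and "completely_transitive m Q X C"
  shows "(m + 1) * card X \<ge> q ^ m"
proof -
  define V where "V = hamming_vertices m Q"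
  have finV: "finite V" unfolding V_def hamming_vertices_def using assms(1) by (simp add: finite_PiE)
  have cardV: "card V = q ^ m" unfolding V_def hamming_vertices_def using assms(1,2) by (simp add: card_PiE)
  have ct: "aut_subgroup m Q X" "C \<subseteq> V" "C \<noteq> {}"
    "\<forall>i \<le> covering_radius m Q C. \<forall>\<alpha>\<in>code_layer m Q C i. \<forall>\<beta>\<in>code_layer m Q C i. \<exists>g\<in>X. g \<alpha> = \<beta>"
    using assms(3) unfolding completely_transitive_def V_def by auto
  have finC: "finite C" using ct(2) finV finite_subset by blast
  have XS: "X \<subseteq> (\<lambda>f. \<lambda>x. if x \<in> V then f x else x) ` (V \<rightarrow>\<^sub>E V)"
  proof
    fix g assume "g \<in> X"
    then have h: "hamming_aut m Q g" using ct(1) unfolding aut_subgroup_def by auto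
    then have b: "bij_betw g V V" and o: "\<forall>x. x \<notin> V \<longrightarrow> g x = x"
      unfolding hamming_aut_def V_def by auto
    have "restrict g V \<in> V \<rightarrow>\<^sub>E V" using b bij_betwE by fastforce
    moreover have "g = (\<lambda>x. if x \<in> V then restrict g V x else x)" using o by auto
    ultimately show "g \<in> (\<lambda>f. \<lambda>x. if x \<in> V then f x else x) ` (V \<rightarrow>\<^sub>E V)" by blast
  qed
  have finX: "finite X"
    by (rule finite_subset[OF XS]) (simp add: finV finite_PiE)
  have hd: "hamming_dist m a b \<le> m" for a b
    unfolding hamming_dist_def using card_mono[of "{..<m}" "{i \<in> {..<m}. a i \<noteq> b i}"] by auto
  have dm: "dist_code m a C \<le> m" for a
  proof -
    obtain c where "c \<in> C" using ct(3) by blast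
    then have "dist_code m a C \<le> hamming_dist m a c" unfolding dist_code_def
      using finC by (intro Min_le) auto
    then show ?thesis using hd[of a c] by linarith
  qed
  have lay: "card (code_layer m Q C i) \<le> card X" for i
  proof (cases "code_layer m Q C i = {}")
    case True then show ?thesis by simp
  next
    case False
    then obtain a where a: "a \<in> code_layer m Q C i" by blast
    have "i \<le> covering_radius m Q C"
    proof -
      have "a \<in> V" "dist_code m a C = i" using a unfolding code_layer_def V_def by auto
      then show ?thesis unfolding covering_radius_def V_def[symmetric]
        using finV by (intro Max_ge) auto
    qed
    then have "code_layer m Q C i \<subseteq> (\<lambda>g. g a) ` X" using ct(4) a by fastforce
    then have "card (code_layer m Q C i) \<le> card ((\<lambda>g. g a) ` X)"
      using finX by (intro card_mono) auto
    also have "\<dots> \<le> card X" using finX by (rule card_image_le)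
    finally show ?thesis .
  qed
  have "V \<subseteq> (\<Union>i\<le>m. code_layer m Q C i)"
    unfolding code_layer_def V_def[symmetric] using dm by auto
  then have "card V \<le> card (\<Union>i\<le>m. code_layer m Q C i)"
    using finV by (intro card_mono) (auto simp: code_layer_def V_def)
  also have "\<dots> \<le> (\<Sum>i\<le>m. card (code_layer m Q C i))" by (rule card_UN_le) simp
  also have "\<dots> \<le> (\<Sum>i\<le>m. card X)" by (intro sum_mono lay)
  also have "\<dots> = (m + 1) * card X" by simp
  finally show ?thesis using cardV by simp
qed

end
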